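(* If the feasibility requirement of an abstract network design problem $P$ is memoryless, then $P$ admits a min operator (with factor $O(1)$).
   Context: Abstract network design: instance = connected graph $G=(V,E)$ with edge lengths $d\ge0$, online requests $Z_i\subseteq V$; with $\mathcal Z_i=\bigcup_{j\le i}Z_j$ the algorithm irrevocably outputs at step $i$ a response $(R_i,C_i)$, $R_i\subseteq E$, $C_i$ an ordered list of pairs of $\binom{\mathcal Z_i}{2}$. Feasibility functions $\mathcal F_i$ map $(C_1,\ldots,C_i)$ to $\{0,1\}$; a solution is feasible iff $\mathcal F_i(C_1,\ldots,C_i)=1$ and each pair of $C_j$ is connected in $R_j$, $j\le i$; it must be feasible at every step. Load function $\rho$ on sets of time steps: subadditive, monotone increasing, zero exactly on $\emptyset$; cost $=\sum_e d(e)\rho(\{j:e\in R_j\})$. The feasibility function is memoryless if whenever $\mathcal F_i(C_1,\ldots,C_i)=1$, then for all $(C'_1,\ldots,C'_{i-1})$ with $\mathcal F_{i-1}(C'_1,\ldots,C'_{i-1})=1$ we have $\mathcal F_i(C'_1,\ldots,C'_{i-1},C_i)=1$. $P$ admits a min operator with factor $\eta$ if for any two deterministic online algorithms $A,B$ there is a deterministic online algorithm $C$ with $\mathrm{cost}(C)\le\eta\min\{\mathrm{cost}(A),\mathrm{cost}(B)\}$ on every request sequence; "admits a min operator" means with $\eta=O(1)$. *)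

theory Defs
  imports Complex_Main
begin

(* Time steps are 1-based: step i sees the prefix  take i Zs. *)

definition connected_by :: "'v set set \<Rightarrow> 'v \<Rightarrow> 'v \<Rightarrow> bool" where
  "connected_by R u v \<longleftrightarrow> (u, v) \<in> {(x, y). {x, y} \<in> R}\<^sup>*"

definition valid_instance ::
  "'v set \<Rightarrow> 'v set set \<Rightarrow> ('v set \<Rightarrow> real) \<Rightarrow> 'v set list \<Rightarrow> bool" where
  "valid_instance V E d Zs \<longleftrightarrow>
     finite V \<and>
     E \<subseteq> {{u, v} | u v. u \<in> V \<and> v \<in> V \<and> u \<noteq> v} \<and>
     (\<forall>u\<in>V. \<forall>v\<in>V. connected_by E u v) \<and>
     (\<forall>e\<in>E. 0 \<le> d e) \<and>
     (\<forall>Z\<in>set Zs. Z \<subseteq> V)"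

definition load_function :: "(nat set \<Rightarrow> real) \<Rightarrow> bool" where
  "load_function \<rho> \<longleftrightarrow>
     (\<forall>S T. finite S \<longrightarrow> finite T \<longrightarrow> \<rho> (S \<union> T) \<le> \<rho> S + \<rho> T) \<and>
     (\<forall>S T. finite T \<longrightarrow> S \<subseteq> T \<longrightarrow> \<rho> S \<le> \<rho> T) \<and>
     (\<forall>S. finite S \<longrightarrow> (\<rho> S = 0 \<longleftrightarrow> S = {}))"

(* Feasibility functions: F V E d (take i Zs) [C_1,...,C_i] is F_i(C_1,...,C_i) on that instance. *)
type_synonym 'v feas =
  "'v set \<Rightarrow> 'v set set \<Rightarrow> ('v set \<Rightarrow> real) \<Rightarrow> 'v set list \<Rightarrow> 'v set list list \<Rightarrow> bool"

(* A response (R_i, C_i): edge set and ordered list of unordered pairs. *)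
type_synonym 'v response = "'v set set \<times> 'v set list"

(* Deterministic online algorithm: response at step i depends on the graph and Z_1..Z_i only. *)
type_synonym 'v algorithm =
  "'v set \<Rightarrow> 'v set set \<Rightarrow> ('v set \<Rightarrow> real) \<Rightarrow> 'v set list \<Rightarrow> 'v response"

definition memoryless :: "'v feas \<Rightarrow> bool" where
  "memoryless F \<longleftrightarrow>
     (\<forall>V E d Zs Cs Cs'. valid_instance V E d Zs \<longrightarrow> Cs \<noteq> [] \<longrightarrow>
        length Cs = length Zs \<longrightarrow> length Cs' = length Cs - 1 \<longrightarrow>
        F V E d Zs Cs \<longrightarrow> F V E d (butlast Zs) Cs' \<longrightarrow>
        F V E d Zs (Cs' @ [last Cs]))"

definition good_response :: "'v set set \<Rightarrow> 'v set list \<Rightarrow> 'v response \<Rightarrow> bool" where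
  "good_response E Zs r \<longleftrightarrow>
     fst r \<subseteq> E \<and>
     (\<forall>p\<in>set (snd r). \<exists>u v. p = {u, v} \<and> u \<noteq> v \<and>
         u \<in> \<Union>(set Zs) \<and> v \<in> \<Union>(set Zs) \<and> connected_by (fst r) u v)"

definition feasible_sol ::
  "'v feas \<Rightarrow> 'v set \<Rightarrow> 'v set set \<Rightarrow> ('v set \<Rightarrow> real) \<Rightarrow> 'v set list \<Rightarrow> 'v response list \<Rightarrow> bool" where
  "feasible_sol F V E d Zs rs \<longleftrightarrow>
     length rs = length Zs \<and>
     (\<forall>i\<in>{1..length Zs}.
        F V E d (take i Zs) (map snd (take i rs)) \<and>
        good_response E (take i Zs) (rs ! (i - 1)))"

definition run :: "'v algorithm \<Rightarrow> 'v set \<Rightarrow> 'v set set \<Rightarrow> ('v set \<Rightarrow> real) \<Rightarrow> 'v set list \<Rightarrow> 'v response list" where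
  "run A V E d Zs = map (\<lambda>i. A V E d (take i Zs)) [1..<Suc (length Zs)]"

definition online_alg :: "'v feas \<Rightarrow> 'v algorithm \<Rightarrow> bool" where
  "online_alg F A \<longleftrightarrow>
     (\<forall>V E d Zs. valid_instance V E d Zs \<longrightarrow> feasible_sol F V E d Zs (run A V E d Zs))"

definition cost :: "(nat set \<Rightarrow> real) \<Rightarrow> 'v set set \<Rightarrow> ('v set \<Rightarrow> real) \<Rightarrow> 'v response list \<Rightarrow> real" where
  "cost \<rho> E d rs = (\<Sum>e\<in>E. d e * \<rho> {j \<in> {1..length rs}. e \<in> fst (rs ! (j - 1))})"

definition admits_min_operator_with_factor :: "'v feas \<Rightarrow> (nat set \<Rightarrow> real) \<Rightarrow> real \<Rightarrow> bool" where
  "admits_min_operator_with_factor F \<rho> \<eta> \<longleftrightarrow>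
     (\<forall>A B. online_alg F A \<longrightarrow> online_alg F B \<longrightarrow>
        (\<exists>C. online_alg F C \<and>
           (\<forall>V E d Zs. valid_instance V E d Zs \<longrightarrow>
              cost \<rho> E d (run C V E d Zs)
                \<le> \<eta> * min (cost \<rho> E d (run A V E d Zs)) (cost \<rho> E d (run B V E d Zs)))))"

(* "admits a min operator": with some constant factor eta = O(1), independent of A, B and the instance *)
definition admits_min_operator :: "'v feas \<Rightarrow> (nat set \<Rightarrow> real) \<Rightarrow> bool" where
  "admits_min_operator F \<rho> \<longleftrightarrow> (\<exists>\<eta>. admits_min_operator_with_factor F \<rho> \<eta>)"

end

theory Submission
  imports Defs
begin

lemma rho_nonneg:
  assumes "load_function \<rho>" "finite S"
  shows "0 \<le> \<rho> S"
proof -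
  have "\<rho> {} \<le> \<rho> S" using assms unfolding load_function_def by blast
  moreover have "\<rho> {} = 0" using assms unfolding load_function_def by blast
  ultimately show ?thesis by simp
qed

lemma cost_nonneg:
  assumes "load_function \<rho>" "\<forall>e\<in>E. 0 \<le> d e"
  shows "0 \<le> cost \<rho> E d rs"
  unfolding cost_def
  by (rule sum_nonneg) (simp add: assms rho_nonneg)

lemma cost_take_le:
  assumes "load_function \<rho>" "\<forall>e\<in>E. 0 \<le> d e"
  shows "cost \<rho> E d (take t rs) \<le> cost \<rho> E d rs"
  unfolding cost_def
proof (rule sum_mono)
  fix e assume e: "e \<in> E"
  have sub: "{j \<in> {1..length (take t rs)}. e \<in> fst (take t rs ! (j - 1))}
      \<subseteq> {j \<in> {1..length rs}. e \<in> fst (rs ! (j - 1))}" by auto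
  have "\<rho> {j \<in> {1..length (take t rs)}. e \<in> fst (take t rs ! (j - 1))}
      \<le> \<rho> {j \<in> {1..length rs}. e \<in> fst (rs ! (j - 1))}"
    using assms(1) sub unfolding load_function_def by auto
  then show "d e * \<rho> {j \<in> {1..length (take t rs)}. e \<in> fst (take t rs ! (j - 1))}
      \<le> d e * \<rho> {j \<in> {1..length rs}. e \<in> fst (rs ! (j - 1))}"
    using assms(2) e by (simp add: mult_left_mono)
qed

lemma half_bound:
  assumes lf: "load_function \<rho>" and dn: "\<forall>e\<in>E. 0 \<le> d e"
    and lA: "length rA = n" and lB: "length rB = n"
    and Q: "\<forall>j\<in>{1..n}. Q j \<longrightarrow> cost \<rho> E d (take j rA) \<le> cost \<rho> E d (take j rB)"
  shows "(\<Sum>e\<in>E. d e * \<rho> {j \<in> {1..n}. Q j \<and> e \<in> fst (rA ! (j - 1))})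
          \<le> min (cost \<rho> E d rA) (cost \<rho> E d rB)"
proof (cases "\<exists>j\<in>{1..n}. Q j")
  case False
  then have em: "\<And>e. {j \<in> {1..n}. Q j \<and> e \<in> fst (rA ! (j - 1))} = {}" by blast
  have r0: "\<rho> {} = 0" using lf unfolding load_function_def by blast
  have "(\<Sum>e\<in>E. d e * \<rho> {j \<in> {1..n}. Q j \<and> e \<in> fst (rA ! (j - 1))}) = 0"
    unfolding em r0 by simp
  then show ?thesis using cost_nonneg[OF lf dn] by simp
next
  case True
  define t where "t = Max {j\<in>{1..n}. Q j}"
  have fin: "finite {j\<in>{1..n}. Q j}" by simp
  have tin: "t \<in> {j\<in>{1..n}. Q j}" unfolding t_def using True fin
    by (intro Max_in) auto
  have tmax: "\<And>j. j \<in> {1..n} \<Longrightarrow> Q j \<Longrightarrow> j \<le> t" unfolding t_def using fin by auto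
  have "(\<Sum>e\<in>E. d e * \<rho> {j \<in> {1..n}. Q j \<and> e \<in> fst (rA ! (j - 1))})
        \<le> cost \<rho> E d (take t rA)"
    unfolding cost_def
  proof (rule sum_mono)
    fix e assume e: "e \<in> E"
    have sub: "{j \<in> {1..n}. Q j \<and> e \<in> fst (rA ! (j - 1))}
       \<subseteq> {j \<in> {1..length (take t rA)}. e \<in> fst (take t rA ! (j - 1))}"
    proof
      fix x assume "x \<in> {j \<in> {1..n}. Q j \<and> e \<in> fst (rA ! (j - 1))}"
      then have x: "1 \<le> x" "x \<le> n" "Q x" "e \<in> fst (rA ! (x - 1))" by auto
      then have "x \<le> t" using tmax by auto
      then show "x \<in> {j \<in> {1..length (take t rA)}. e \<in> fst (take t rA ! (j - 1))}"
        using x lA by (auto simp: nth_take)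
    qed
    have "\<rho> {j \<in> {1..n}. Q j \<and> e \<in> fst (rA ! (j - 1))}
       \<le> \<rho> {j \<in> {1..length (take t rA)}. e \<in> fst (take t rA ! (j - 1))}"
      using lf sub unfolding load_function_def by auto
    then show "d e * \<rho> {j \<in> {1..n}. Q j \<and> e \<in> fst (rA ! (j - 1))}
       \<le> d e * \<rho> {j \<in> {1..length (take t rA)}. e \<in> fst (take t rA ! (j - 1))}"
      using dn e by (simp add: mult_left_mono)
  qed
  moreover have "cost \<rho> E d (take t rA) \<le> cost \<rho> E d (take t rB)" using Q tin by auto
  moreover note cost_take_le[OF lf dn, of t rA] cost_take_le[OF lf dn, of t rB]
  ultimately show ?thesis by simp
qed

lemma run_take: "run A V E d (take j Zs) = take j (run A V E d Zs)"
proof -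
  have "take j (run A V E d Zs) = map (\<lambda>i. A V E d (take i Zs)) (take j [1..<Suc (length Zs)])"
    unfolding run_def by (simp add: take_map)
  also have "take j [1..<Suc (length Zs)] = [1..<Suc (min j (length Zs))]"
    by (simp add: take_upt min_def del: upt_Suc)
  finally have 1: "take j (run A V E d Zs) = map (\<lambda>i. A V E d (take i Zs)) [1..<Suc (min j (length Zs))]" .
  have 2: "run A V E d (take j Zs) = map (\<lambda>i. A V E d (take i (take j Zs))) [1..<Suc (min j (length Zs))]"
    unfolding run_def by (simp add: min.commute del: upt_Suc)
  show ?thesis unfolding 1 2
    by (rule map_cong) (auto simp: min_def split: if_splits)
qed

lemma run_nth: "1 \<le> j \<Longrightarrow> j \<le> length Zs \<Longrightarrow> run A V E d Zs ! (j - 1) = A V E d (take j Zs)"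
proof -
  assume j: "1 \<le> j" "j \<le> length Zs"
  have "[1..<Suc (length Zs)] ! (j - 1) = j" using j by (subst nth_upt) auto
  then show ?thesis unfolding run_def using j by (simp add: nth_map del: upt_Suc)
qed

lemma run_length[simp]: "length (run A V E d Zs) = length Zs"
  unfolding run_def by (simp del: upt_Suc)

lemma valid_take: "valid_instance V E d Zs \<Longrightarrow> valid_instance V E d (take i Zs)"
  unfolding valid_instance_def by (auto dest: in_set_takeD)


lemma cost_mix:
  assumes lf: "load_function \<rho>" and dn: "\<forall>e\<in>E. 0 \<le> d e"
    and lA: "length rA = n" and lB: "length rB = n" and lC: "length rC = n"
    and C: "\<forall>j\<in>{1..n}. rC ! (j - 1) = (if P j then rA ! (j - 1) else rB ! (j - 1))"
    and P1: "\<forall>j\<in>{1..n}. P j \<longrightarrow> cost \<rho> E d (take j rA) \<le> cost \<rho> E d (take j rB)"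
    and P2: "\<forall>j\<in>{1..n}. \<not> P j \<longrightarrow> cost \<rho> E d (take j rB) \<le> cost \<rho> E d (take j rA)"
  shows "cost \<rho> E d rC \<le> 2 * min (cost \<rho> E d rA) (cost \<rho> E d rB)"
proof -
  have h1: "(\<Sum>e\<in>E. d e * \<rho> {j \<in> {1..n}. P j \<and> e \<in> fst (rA ! (j - 1))})
          \<le> min (cost \<rho> E d rA) (cost \<rho> E d rB)"
    by (rule half_bound[OF lf dn lA lB P1])
  have h2: "(\<Sum>e\<in>E. d e * \<rho> {j \<in> {1..n}. \<not> P j \<and> e \<in> fst (rB ! (j - 1))})
          \<le> min (cost \<rho> E d rB) (cost \<rho> E d rA)"
    by (rule half_bound[OF lf dn lB lA P2])
  have "cost \<rho> E d rC \<le> (\<Sum>e\<in>E. d e * \<rho> {j \<in> {1..n}. P j \<and> e \<in> fst (rA ! (j - 1))}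
       + d e * \<rho> {j \<in> {1..n}. \<not> P j \<and> e \<in> fst (rB ! (j - 1))})"
    unfolding cost_def
  proof (rule sum_mono)
    fix e assume e: "e \<in> E"
    have eq: "{j \<in> {1..length rC}. e \<in> fst (rC ! (j - 1))} =
      {j \<in> {1..n}. P j \<and> e \<in> fst (rA ! (j - 1))} \<union> {j \<in> {1..n}. \<not> P j \<and> e \<in> fst (rB ! (j - 1))}"
    proof (rule set_eqI)
      fix x
      show "x \<in> {j \<in> {1..length rC}. e \<in> fst (rC ! (j - 1))} \<longleftrightarrow> x \<in>
      {j \<in> {1..n}. P j \<and> e \<in> fst (rA ! (j - 1))} \<union> {j \<in> {1..n}. \<not> P j \<and> e \<in> fst (rB ! (j - 1))}"
      proof (cases "x \<in> {1..n}")
        case True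
        then have "rC ! (x - 1) = (if P x then rA ! (x - 1) else rB ! (x - 1))" using C by blast
        then show ?thesis using True lC by (cases "P x") auto
      qed (use lC in auto)
    qed
    have "\<rho> ({j \<in> {1..n}. P j \<and> e \<in> fst (rA ! (j - 1))} \<union> {j \<in> {1..n}. \<not> P j \<and> e \<in> fst (rB ! (j - 1))})
       \<le> \<rho> {j \<in> {1..n}. P j \<and> e \<in> fst (rA ! (j - 1))} + \<rho> {j \<in> {1..n}. \<not> P j \<and> e \<in> fst (rB ! (j - 1))}"
      using lf unfolding load_function_def by simp
    then show "d e * \<rho> {j \<in> {1..length rC}. e \<in> fst (rC ! (j - 1))}
      \<le> d e * \<rho> {j \<in> {1..n}. P j \<and> e \<in> fst (rA ! (j - 1))} + d e * \<rho> {j \<in> {1..n}. \<not> P j \<and> e \<in> fst (rB ! (j - 1))}"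
      unfolding eq using dn e by (simp add: mult_left_mono flip: distrib_left)
  qed
  also have "\<dots> = (\<Sum>e\<in>E. d e * \<rho> {j \<in> {1..n}. P j \<and> e \<in> fst (rA ! (j - 1))})
     + (\<Sum>e\<in>E. d e * \<rho> {j \<in> {1..n}. \<not> P j \<and> e \<in> fst (rB ! (j - 1))})"
    by (rule sum.distrib)
  finally have "cost \<rho> E d rC \<le> (\<Sum>e\<in>E. d e * \<rho> {j \<in> {1..n}. P j \<and> e \<in> fst (rA ! (j - 1))})
     + (\<Sum>e\<in>E. d e * \<rho> {j \<in> {1..n}. \<not> P j \<and> e \<in> fst (rB ! (j - 1))})" .
  then show ?thesis using h1 h2 unfolding min_def by (auto split: if_splits)
qed

theorem corollaryC4:
  fixes F :: "'v feas" and \<rho> :: "nat set \<Rightarrow> real"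
  assumes "load_function \<rho>" and "memoryless F"
  shows "admits_min_operator F \<rho>"
  unfolding admits_min_operator_def admits_min_operator_with_factor_def
proof (intro exI[of _ 2] allI impI)
  fix A B :: "'v algorithm"
  assume oA: "online_alg F A" and oB: "online_alg F B"
  define C :: "'v algorithm" where "C = (\<lambda>V E d Zs.
     if cost \<rho> E d (run A V E d Zs) \<le> cost \<rho> E d (run B V E d Zs) then A V E d Zs else B V E d Zs)"
  have Cnth: "run C V E d Zs ! (j - 1) = (if cost \<rho> E d (take j (run A V E d Zs)) \<le> cost \<rho> E d (take j (run B V E d Zs))
      then run A V E d Zs ! (j - 1) else run B V E d Zs ! (j - 1))"
    if "j \<in> {1..length Zs}" for V E d Zs j
  proof -
    have "run C V E d Zs ! (j - 1) = C V E d (take j Zs)" using that by (intro run_nth) auto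
    moreover have "run A V E d Zs ! (j - 1) = A V E d (take j Zs)" using that by (intro run_nth) auto
    moreover have "run B V E d Zs ! (j - 1) = B V E d (take j Zs)" using that by (intro run_nth) auto
    ultimately show ?thesis unfolding C_def by (simp add: run_take)
  qed
  show "\<exists>C. online_alg F C \<and>
           (\<forall>V E d (Zs :: 'v set list). valid_instance V E d Zs \<longrightarrow>
              cost \<rho> E d (run C V E d Zs)
                \<le> 2 * min (cost \<rho> E d (run A V E d Zs)) (cost \<rho> E d (run B V E d Zs)))"
  proof (intro exI conjI allI impI)
    fix V E d and Zs :: "'v set list" assume vi: "valid_instance V E d Zs"
    have dn: "\<forall>e\<in>E. 0 \<le> d e" using vi unfolding valid_instance_def by blast
    show "cost \<rho> E d (run C V E d Zs)
                \<le> 2 * min (cost \<rho> E d (run A V E d Zs)) (cost \<rho> E d (run B V E d Zs))"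
    proof -
      have CC: "\<forall>j\<in>{1..length Zs}. run C V E d Zs ! (j - 1) = (if cost \<rho> E d (take j (run A V E d Zs)) \<le> cost \<rho> E d (take j (run B V E d Zs))
        then run A V E d Zs ! (j - 1) else run B V E d Zs ! (j - 1))" using Cnth by blast
      show ?thesis
        by (rule cost_mix[OF assms(1) dn _ _ _ CC]) auto
    qed
  next
    show "online_alg F C"
      unfolding online_alg_def
    proof (intro allI impI)
      fix V E d and Zs :: "'v set list" assume vi: "valid_instance V E d Zs"
      let ?rA = "run A V E d Zs" and ?rB = "run B V E d Zs" and ?rC = "run C V E d Zs"
      let ?P = "\<lambda>j. cost \<rho> E d (take j ?rA) \<le> cost \<rho> E d (take j ?rB)"
      have fA: "feasible_sol F V E d Zs ?rA" using oA vi unfolding online_alg_def by blast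
      have fB: "feasible_sol F V E d Zs ?rB" using oB vi unfolding online_alg_def by blast
      have good: "good_response E (take i Zs) (?rC ! (i - 1))" if "i \<in> {1..length Zs}" for i
        using fA fB that Cnth[OF that] unfolding feasible_sol_def by auto
      have "\<forall>i. 1 \<le> i \<longrightarrow> i \<le> length Zs \<longrightarrow> F V E d (take i Zs) (map snd (take i ?rC))"
      proof (intro allI)
        fix i show "1 \<le> i \<longrightarrow> i \<le> length Zs \<longrightarrow> F V E d (take i Zs) (map snd (take i ?rC))"
        proof (induction i)
          case 0 then show ?case by simp
        next
          case (Suc i)
          show ?case
          proof (intro impI)
            assume "1 \<le> Suc i" and iL: "Suc i \<le> length Zs"
            have iin: "Suc i \<in> {1..length Zs}" using iL by simp
            have tk: "map snd (take (Suc i) r) = map snd (take i r) @ [snd (r ! i)]"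
              if "length r = length Zs" for r :: "'v response list"
              using that iL by (simp add: take_Suc_conv_app_nth)
            have cn: "?rC ! i = (if ?P (Suc i) then ?rA ! i else ?rB ! i)"
              using Cnth[OF iin] by simp
            have FA: "F V E d (take (Suc i) Zs) (map snd (take (Suc i) ?rA))"
              using fA iin unfolding feasible_sol_def by blast
            have FB: "F V E d (take (Suc i) Zs) (map snd (take (Suc i) ?rB))"
              using fB iin unfolding feasible_sol_def by blast
            show "F V E d (take (Suc i) Zs) (map snd (take (Suc i) ?rC))"
            proof (cases "i = 0")
              case True
              then have "map snd (take (Suc i) ?rC) =
                 (if ?P (Suc i) then map snd (take (Suc i) ?rA) else map snd (take (Suc i) ?rB))"
                using tk cn by simp
              then show ?thesis using FA FB by simp
            next
              case False
              have IH: "F V E d (take i Zs) (map snd (take i ?rC))" using Suc.IH False iL by simp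
              have vt: "valid_instance V E d (take (Suc i) Zs)" by (rule valid_take[OF vi])
              have bl: "butlast (take (Suc i) Zs) = take i Zs"
                using iL by (simp add: butlast_take)
              have gen: "F V E d (take (Suc i) Zs) (map snd (take i ?rC) @ [snd (r ! i)])"
                if lr: "length r = length Zs" and Fr: "F V E d (take (Suc i) Zs) (map snd (take (Suc i) r))"
                for r :: "'v response list"
              proof -
                have rne: "r \<noteq> []" using lr iL by auto
                have "F V E d (take (Suc i) Zs) (map snd (take i ?rC) @ [last (map snd (take (Suc i) r))])"
                  using assms(2)[unfolded memoryless_def, rule_format, OF vt _ _ _ Fr, of "map snd (take i ?rC)"]
                    lr iL IH bl rne by simp
                then show ?thesis using tk[OF lr] by simp
              qed
              show ?thesis using gen[of ?rA] gen[of ?rB] FA FB tk[of ?rC] cn by simp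
            qed
          qed
        qed
      qed
      then show "feasible_sol F V E d Zs ?rC"
        unfolding feasible_sol_def using good by simp
    qed
  qed
qed

end
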